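(* Let $\mu$ be a probability measure on $\mathbb{R}$ with finite support $V$ and let $c:V\to\mathbb{R}$ satisfy $c(v)\le v$ for all $v\in V$. Then there exist incentive compatible distributions $\nu_1,\dots,\nu_J$ and weights $(q_1,\dots,q_J)\in\Delta(\{1,\dots,J\})$ such that $\sum_j q_j\nu_j=\mu$ and $\sigma^*(c,\mu)\subset\sigma^*(c,\nu_j)$ for every $j$.
   Context: For a finitely supported probability $\nu$ on $V$ and $p\in\mathbb{R}$, $\pi(c,\nu,p)=\sum_{v\in\mathrm{Supp}(\nu),\,v\ge p}(p-c(v))\nu(\{v\})$ and $\sigma^*(c,\nu)=\arg\max_{p\in\mathbb{R}}\pi(c,\nu,p)$. A distribution $\nu$ on $V$ is an incentive compatible distribution (ICD) if $\pi(c,\nu,p)$ is the same nonnegative constant for all $p\in\mathrm{Supp}(\nu)$. *)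

theory Defs
  imports "HOL-Probability.Probability"
begin

definition profit :: "(real \<Rightarrow> real) \<Rightarrow> real pmf \<Rightarrow> real \<Rightarrow> real" where
  "profit c \<nu> p = (\<Sum>v\<in>{v\<in>set_pmf \<nu>. v \<ge> p}. (p - c v) * pmf \<nu> v)"

definition opt_prices :: "(real \<Rightarrow> real) \<Rightarrow> real pmf \<Rightarrow> real set" where
  "opt_prices c \<nu> = {p. \<forall>q. profit c \<nu> q \<le> profit c \<nu> p}"

definition ICD :: "(real \<Rightarrow> real) \<Rightarrow> real pmf \<Rightarrow> bool" where
  "ICD c \<nu> \<longleftrightarrow> (\<exists>k\<ge>0. \<forall>p\<in>set_pmf \<nu>. profit c \<nu> p = k)"

end

theory Submission
  imports Defs
begin


lemma embed_fin:
  fixes f :: "real \<Rightarrow> real"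
  assumes "finite A" "\<And>x. 0 \<le> f x" "\<And>x. x \<notin> A \<Longrightarrow> f x = 0" "(\<Sum>x\<in>A. f x) = 1"
  shows "pmf (embed_pmf f) = f" "set_pmf (embed_pmf f) = {x. f x \<noteq> 0}"
proof -
  have "(\<integral>\<^sup>+x. ennreal (f x) \<partial>count_space UNIV) = (\<Sum>x\<in>A. ennreal (f x))"
    by (rule nn_integral_count_space') (use assms in auto)
  also have "\<dots> = ennreal (\<Sum>x\<in>A. f x)" using assms by (simp add: sum_ennreal)
  finally have 1: "(\<integral>\<^sup>+x. ennreal (f x) \<partial>count_space UNIV) = 1" using assms(4) by simp
  show "pmf (embed_pmf f) = f" using pmf_embed_pmf[OF assms(2) 1] by auto
  show "set_pmf (embed_pmf f) = {x. f x \<noteq> 0}" using set_embed_pmf[OF assms(2) 1] by auto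
qed

lemma profit_sum:
  assumes "finite A" "set_pmf \<nu> \<subseteq> A"
  shows "profit c \<nu> p = (\<Sum>v\<in>{v\<in>A. v \<ge> p}. (p - c v) * pmf \<nu> v)"
  unfolding profit_def by (rule sum.mono_neutral_left) (use assms in \<open>auto simp: set_pmf_iff\<close>)

lemma sum_shift:
  fixes q w :: real and c g :: "real \<Rightarrow> real"
  shows
  "(\<Sum>v\<in>T. (q - c v) * g v) = (\<Sum>v\<in>T. (w - c v) * g v) - (w - q) * (\<Sum>v\<in>T. g v)"
proof -
  have "(\<Sum>v\<in>T. (q - c v) * g v) = (\<Sum>v\<in>T. (w - c v) * g v - (w - q) * g v)"
    by (rule sum.cong) (auto simp: left_diff_distrib right_diff_distrib)
  then show ?thesis by (simp add: sum_subtractf sum_distrib_left)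
qed

lemma profit_above:
  assumes "\<forall>v\<in>set_pmf \<nu>. v < q" shows "profit c \<nu> q = 0"
  unfolding profit_def using assms by (auto intro!: sum.neutral)

lemma profit_next:
  assumes "finite (set_pmf \<nu>)" "v \<in> set_pmf \<nu>" "q \<le> v"
  shows "\<exists>w\<in>set_pmf \<nu>. q \<le> w \<and> profit c \<nu> q = profit c \<nu> w - (w - q) * (\<Sum>x\<in>{x\<in>set_pmf \<nu>. x \<ge> w}. pmf \<nu> x)
     \<and> (\<Sum>x\<in>{x\<in>set_pmf \<nu>. x \<ge> w}. pmf \<nu> x) > 0"
proof -
  define B where "B = {x\<in>set_pmf \<nu>. x \<ge> q}"
  have fB: "finite B" "B \<noteq> {}" using assms unfolding B_def by auto
  define w where "w = Min B"
  have wB: "w \<in> B" using fB unfolding w_def by (rule Min_in)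
  have eq: "B = {x\<in>set_pmf \<nu>. x \<ge> w}"
    using wB fB Min_le unfolding w_def B_def by fastforce
  have "profit c \<nu> q = (\<Sum>x\<in>B. (q - c x) * pmf \<nu> x)" unfolding profit_def B_def ..
  also have "\<dots> = profit c \<nu> w - (w - q) * (\<Sum>x\<in>{x\<in>set_pmf \<nu>. x \<ge> w}. pmf \<nu> x)"
    unfolding sum_shift[of q c _ B w] unfolding eq profit_def ..
  finally have 1: "profit c \<nu> q = profit c \<nu> w - (w - q) * (\<Sum>x\<in>{x\<in>set_pmf \<nu>. x \<ge> w}. pmf \<nu> x)" .
  have "(\<Sum>x\<in>{x\<in>set_pmf \<nu>. x \<ge> w}. pmf \<nu> x) \<ge> pmf \<nu> w"
    using wB fB eq by (intro member_le_sum) auto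
  moreover have "pmf \<nu> w > 0" using wB B_def by (simp add: pmf_positive)
  ultimately show ?thesis using 1 wB B_def by auto
qed

lemma ICD_max:
  assumes "finite (set_pmf \<nu>)" "\<forall>s\<in>set_pmf \<nu>. profit c \<nu> s = K" "K \<ge> 0"
  shows "profit c \<nu> q \<le> K"
proof (cases "\<forall>v\<in>set_pmf \<nu>. v < q")
  case True then show ?thesis using profit_above assms by simp
next
  case False
  then obtain v where "v \<in> set_pmf \<nu>" "q \<le> v" by (auto simp: not_less)
  from profit_next[OF assms(1) this, of c] obtain w where
    "w\<in>set_pmf \<nu>" "q \<le> w" "profit c \<nu> q = profit c \<nu> w - (w - q) * (\<Sum>x\<in>{x\<in>set_pmf \<nu>. x \<ge> w}. pmf \<nu> x)"
    "(\<Sum>x\<in>{x\<in>set_pmf \<nu>. x \<ge> w}. pmf \<nu> x) > 0" by blast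
  then show ?thesis using assms(2) by (simp add: mult_nonneg_nonneg)
qed

lemma profit_mix:
  assumes "finite A" "set_pmf \<mu> \<subseteq> A" "set_pmf \<nu> \<subseteq> A" "set_pmf \<mu>' \<subseteq> A"
    "\<forall>v. pmf \<mu> v = t * pmf \<nu> v + (1 - t) * pmf \<mu>' v"
  shows "profit c \<mu> p = t * profit c \<nu> p + (1 - t) * profit c \<mu>' p"
proof -
  have "profit c \<mu> p = (\<Sum>v\<in>{v\<in>A. v \<ge> p}. t * ((p - c v) * pmf \<nu> v) + (1 - t) * ((p - c v) * pmf \<mu>' v))"
    unfolding profit_sum[OF assms(1,2)] by (intro sum.cong) (auto simp: assms(5)[rule_format] algebra_simps)
  also have "\<dots> = t * profit c \<nu> p + (1 - t) * profit c \<mu>' p"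
    unfolding profit_sum[OF assms(1,3)] profit_sum[OF assms(1,4)] sum.distrib sum_distrib_left ..
  finally show ?thesis .
qed



lemma ICD_exists:
  fixes c :: "real \<Rightarrow> real"
  shows "finite W \<Longrightarrow> W \<noteq> {} \<Longrightarrow> (\<forall>w\<in>W. w < Max W \<longrightarrow> c w < w) \<Longrightarrow> c (Max W) \<le> Max W
    \<Longrightarrow> \<exists>\<nu> K. set_pmf \<nu> = W \<and> K \<ge> 0 \<and> (\<forall>w\<in>W. profit c \<nu> w = K)"
proof (induction "card W" arbitrary: W rule: less_induct)
  case (less W)
  show ?case
  proof (cases "\<exists>w. W = {w}")
    case True
    then obtain w where W: "W = {w}" by blast
    have "{v\<in>set_pmf (return_pmf w). v \<ge> w} = {w}" by auto
    hence "profit c (return_pmf w) w = w - c w" unfolding profit_def by simp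
    then show ?thesis using less.prems W by (intro exI[of _ "return_pmf w"] exI[of _ "w - c w"]) auto
  next
    case False
    define w0 where "w0 = Min W"
    define W' where "W' = W - {w0}"
    have w0W: "w0 \<in> W" using less.prems unfolding w0_def by (intro Min_in) auto
    obtain x where x: "x \<in> W" "x \<noteq> w0" using False less.prems(2) w0W by blast
    have "w0 \<le> x" using less.prems x unfolding w0_def by auto
    hence xw0: "w0 < x" using x by auto
    have fW': "finite W'" "W' \<noteq> {}" using less.prems x unfolding W'_def by auto
    have MW: "Max W \<in> W" using less.prems by (intro Max_in) auto
    have "x \<le> Max W" using less.prems x by auto
    hence w0M: "w0 < Max W" using xw0 by auto
    have MW': "Max W' = Max W"
    proof (rule antisym)
      show "Max W' \<le> Max W" using fW' less.prems unfolding W'_def by (intro Max_mono) auto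
      show "Max W \<le> Max W'" using fW' MW w0M unfolding W'_def by (intro Max_ge) auto
    qed
    have card: "card W' < card W" unfolding W'_def
      by (rule card_Diff1_less[OF less.prems(1) w0W])
    have "\<forall>w\<in>W'. w < Max W' \<longrightarrow> c w < w" using less.prems(3) MW' unfolding W'_def by auto
    moreover have "c (Max W') \<le> Max W'" using MW' less.prems by simp
    ultimately obtain \<nu>' K' where \<nu>': "set_pmf \<nu>' = W'" "K' \<ge> 0" "\<forall>w\<in>W'. profit c \<nu>' w = K'"
      using less.hyps[OF card fW'] by blast
    define w1 where "w1 = Min W'"
    have w1W': "w1 \<in> W'" using fW' unfolding w1_def by (intro Min_in)
    have "w0 \<le> w1" using w1W' less.prems unfolding W'_def w0_def by auto
    hence d: "w1 - w0 > 0" using w1W' unfolding W'_def by auto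
    have e: "w0 - c w0 > 0" using less.prems(3) w0W w0M by auto
    define d' where "d' = w1 - w0"
    define e' where "e' = w0 - c w0"
    have dp: "0 < d'" using d unfolding d'_def .
    have ep: "0 < e'" using e unfolding e'_def .
    define \<alpha> where "\<alpha> = d' / (e' + d')"
    have a0: "0 < \<alpha>" "\<alpha> < 1" unfolding \<alpha>_def using dp ep by (simp_all add: divide_pos_pos)
    have a1: "1 - \<alpha> = e' / (e' + d')" unfolding \<alpha>_def using dp ep by (simp add: field_simps)
    define f where "f v = (if v = w0 then \<alpha> else (1 - \<alpha>) * pmf \<nu>' v)" for v
    have f0: "\<And>v. 0 \<le> f v" using a0 unfolding f_def by simp
    have f1: "f v = 0" if "v \<notin> W" for v
    proof -
      have "v \<noteq> w0" using that w0W by blast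
      moreover have "v \<notin> set_pmf \<nu>'" using that \<nu>'(1) unfolding W'_def by blast
      ultimately show ?thesis unfolding f_def by (simp add: set_pmf_iff)
    qed
    have sW': "(\<Sum>v\<in>W'. pmf \<nu>' v) = 1" using fW' \<nu>'(1) by (intro sum_pmf_eq_1) auto
    have fW'eq: "\<And>v. v \<in> W' \<Longrightarrow> f v = (1 - \<alpha>) * pmf \<nu>' v" unfolding f_def W'_def by auto
    have "(\<Sum>v\<in>W. f v) = f w0 + (\<Sum>v\<in>W'. f v)"
      unfolding W'_def using less.prems w0W by (simp add: sum.remove)
    also have "(\<Sum>v\<in>W'. f v) = (\<Sum>v\<in>W'. (1 - \<alpha>) * pmf \<nu>' v)" using fW'eq by (rule sum.cong[OF refl])
    also have "\<dots> = 1 - \<alpha>" using sW' by (simp add: sum_distrib_left[symmetric])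
    finally have f2: "(\<Sum>v\<in>W. f v) = 1" unfolding f_def by simp
    define \<nu> where "\<nu> = embed_pmf f"
    have pmf\<nu>: "pmf \<nu> = f" and set\<nu>: "set_pmf \<nu> = {x. f x \<noteq> 0}"
      unfolding \<nu>_def using embed_fin[OF less.prems(1) f0 f1 f2] by auto
    have setW: "set_pmf \<nu> = W"
    proof -
      have "f v \<noteq> 0" if "v \<in> W" for v
      proof (cases "v = w0")
        case True then show ?thesis using a0 unfolding f_def by auto
      next
        case False then have "v \<in> set_pmf \<nu>'" using \<nu>'(1) that unfolding W'_def by auto
        then show ?thesis using False a0 unfolding f_def by (auto simp: set_pmf_iff)
      qed
      then show ?thesis unfolding set\<nu> using f1 by auto
    qed
    have fin\<nu>': "finite (set_pmf \<nu>')" using \<nu>'(1) fW' by simp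
    have P1: "profit c \<nu> w = (1 - \<alpha>) * K'" if "w \<in> W'" for w
    proof -
      have "w0 \<le> w" using that less.prems(1) unfolding W'_def w0_def by simp
      moreover have "w \<noteq> w0" using that unfolding W'_def by simp
      ultimately have ww0: "w0 < w" by simp
      have eqs: "{v\<in>W. v \<ge> w} = {v\<in>W'. v \<ge> w}" using ww0 unfolding W'_def by auto
      have "profit c \<nu> w = (\<Sum>v\<in>{v\<in>W'. v \<ge> w}. (w - c v) * f v)"
        using profit_sum[OF less.prems(1), of \<nu> c w] setW pmf\<nu> eqs by simp
      also have "\<dots> = (\<Sum>v\<in>{v\<in>W'. v \<ge> w}. (1 - \<alpha>) * ((w - c v) * pmf \<nu>' v))"
        using fW'eq by (intro sum.cong) auto
      also have "\<dots> = (1 - \<alpha>) * profit c \<nu>' w"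
        unfolding profit_sum[OF fW'(1) equalityD1[OF \<nu>'(1)], of c w] by (simp add: sum_distrib_left)
      finally show ?thesis using \<nu>'(3) that by simp
    qed
    have P0: "profit c \<nu> w0 = (1 - \<alpha>) * K'"
    proof -
      have eqs: "{v\<in>W. v \<ge> w0} = W" using less.prems unfolding w0_def by auto
      have eqs': "{v\<in>W'. v \<ge> w0} = W'" using less.prems unfolding w0_def W'_def by auto
      have eqs'': "{v\<in>W'. v \<ge> w1} = W'" using fW' unfolding w1_def by auto
      have "profit c \<nu> w0 = (\<Sum>v\<in>W. (w0 - c v) * f v)"
        using profit_sum[OF less.prems(1), of \<nu> c w0] setW pmf\<nu> eqs by simp
      also have "\<dots> = (w0 - c w0) * f w0 + (\<Sum>v\<in>W'. (w0 - c v) * f v)"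
        unfolding W'_def using less.prems w0W by (simp add: sum.remove)
      also have "(\<Sum>v\<in>W'. (w0 - c v) * f v) = (1 - \<alpha>) * (\<Sum>v\<in>W'. (w0 - c v) * pmf \<nu>' v)"
        using fW'eq by (simp add: sum_distrib_left mult.left_commute)
      also have "(\<Sum>v\<in>W'. (w0 - c v) * pmf \<nu>' v) = (\<Sum>v\<in>W'. (w1 - c v) * pmf \<nu>' v) - (w1 - w0) * 1"
        using sum_shift[of w0 c "pmf \<nu>'" W' w1] sW' by simp
      also have "(\<Sum>v\<in>W'. (w1 - c v) * pmf \<nu>' v) = K'"
        using profit_sum[OF fW'(1), of \<nu>' c w1] \<nu>'(1,3) w1W' eqs'' by simp
      finally have "profit c \<nu> w0 = e' * \<alpha> + (1 - \<alpha>) * (K' - d')"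
        unfolding f_def e'_def d'_def by simp
      also have "\<dots> = (1 - \<alpha>) * K'"
      proof -
        have "e' * \<alpha> = (1 - \<alpha>) * d'" unfolding a1 unfolding \<alpha>_def by simp
        then show ?thesis by (simp add: algebra_simps)
      qed
      finally show ?thesis .
    qed
    show ?thesis
    proof (intro exI conjI)
      show "set_pmf \<nu> = W" by (rule setW)
      show "0 \<le> (1 - \<alpha>) * K'" using a0 \<nu>'(2) by simp
      show "\<forall>w\<in>W. profit c \<nu> w = (1 - \<alpha>) * K'"
        using P0 P1 unfolding W'_def by auto
    qed
  qed
qed


lemma profit_top:
  assumes "finite (set_pmf g)" "m = Max (set_pmf g)"
  shows "profit c g m = (m - c m) * pmf g m"
proof -
  have "m \<in> set_pmf g" using assms set_pmf_not_empty by (metis Max_in)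
  then have "{v\<in>set_pmf g. v \<ge> m} = {m}" using assms by (auto intro: antisym)
  then show ?thesis unfolding profit_def by simp
qed

lemma opt_check:
  assumes "finite V" "set_pmf g \<subseteq> V" "\<forall>v\<in>set_pmf g. c v \<le> v" "\<forall>q\<in>V. profit c g q \<le> profit c g s"
  shows "s \<in> opt_prices c g"
  unfolding opt_prices_def
proof (intro CollectI allI)
  fix q
  have fin: "finite (set_pmf g)" using assms finite_subset by blast
  show "profit c g q \<le> profit c g s"
  proof (cases "\<forall>v\<in>set_pmf g. v < q")
    case True
    define m where "m = Max (set_pmf g)"
    have mV: "m \<in> set_pmf g" using fin set_pmf_not_empty unfolding m_def by (metis Max_in)
    have "profit c g m \<ge> 0" using profit_top[OF fin m_def, of c] assms(3) mV by simp
    moreover have "profit c g m \<le> profit c g s" using assms mV by auto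
    ultimately show ?thesis using profit_above[OF True] by simp
  next
    case False
    then obtain v where "v \<in> set_pmf g" "q \<le> v" by (auto simp: not_less)
    from profit_next[OF fin this, of c] obtain w where
      "w\<in>set_pmf g" "q \<le> w" "profit c g q = profit c g w - (w - q) * (\<Sum>x\<in>{x\<in>set_pmf g. x \<ge> w}. pmf g x)"
      "(\<Sum>x\<in>{x\<in>set_pmf g. x \<ge> w}. pmf g x) > 0" by blast
    moreover have "profit c g w \<le> profit c g s" using assms \<open>w\<in>set_pmf g\<close> by auto
    ultimately show ?thesis by (smt (verit) mult_nonneg_nonneg)
  qed
qed

lemma opt_nonempty:
  assumes "finite (set_pmf \<mu>)" "\<forall>v\<in>set_pmf \<mu>. c v \<le> v"
  shows "\<exists>s\<in>set_pmf \<mu>. s \<in> opt_prices c \<mu>"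
proof -
  define M where "M = Max (profit c \<mu> ` set_pmf \<mu>)"
  have "M \<in> profit c \<mu> ` set_pmf \<mu>" unfolding M_def using assms set_pmf_not_empty
    by (intro Max_in) auto
  then obtain s where s: "s \<in> set_pmf \<mu>" "profit c \<mu> s = M" by auto
  have "\<forall>q\<in>set_pmf \<mu>. profit c \<mu> q \<le> profit c \<mu> s" using s assms unfolding M_def by auto
  then have "s \<in> opt_prices c \<mu>" using assms by (intro opt_check[of "set_pmf \<mu>"]) auto
  then show ?thesis using s by auto
qed

lemma opt_c_less:
  assumes fin: "finite (set_pmf \<mu>)" and cv: "\<forall>v\<in>set_pmf \<mu>. c v \<le> v"
    and s: "s \<in> opt_prices c \<mu>" "s \<in> set_pmf \<mu>" "s < Max (set_pmf \<mu>)"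
  shows "c s < s"
proof (rule ccontr)
  assume "\<not> c s < s"
  hence cs: "c s = s" using cv s by force
  define V where "V = set_pmf \<mu>"
  define s' where "s' = Min {v\<in>V. v > s}"
  have ne: "{v\<in>V. v > s} \<noteq> {}" using s fin set_pmf_not_empty unfolding V_def by (metis (mono_tags, lifting) Max_in empty_iff mem_Collect_eq)
  have s'V: "s' \<in> V" "s' > s" using Min_in[of "{v\<in>V. v > s}"] ne fin unfolding s'_def V_def by auto
  define T where "T = {v\<in>V. v \<ge> s'}"
  have finT: "finite T" using fin unfolding T_def V_def by auto
  have Teq: "{v\<in>V. v \<ge> s} = insert s T" "s \<notin> T"
  proof -
    have "v \<ge> s'" if "v \<in> V" "v > s" for v using that fin unfolding s'_def V_def by auto
    then show "{v\<in>V. v \<ge> s} = insert s T" using s s'V unfolding T_def V_def by force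
    show "s \<notin> T" using s'V unfolding T_def by auto
  qed
  have "profit c \<mu> s = (s - c s) * pmf \<mu> s + (\<Sum>v\<in>T. (s - c v) * pmf \<mu> v)"
    unfolding profit_def V_def[symmetric] Teq(1) using finT Teq(2) by simp
  also have "\<dots> = (\<Sum>v\<in>T. (s' - c v) * pmf \<mu> v) - (s' - s) * (\<Sum>v\<in>T. pmf \<mu> v)"
    using cs sum_shift[of s c "pmf \<mu>" T s'] by simp
  also have "(\<Sum>v\<in>T. (s' - c v) * pmf \<mu> v) = profit c \<mu> s'"
    unfolding profit_def T_def V_def ..
  finally have eq: "profit c \<mu> s = profit c \<mu> s' - (s' - s) * (\<Sum>v\<in>T. pmf \<mu> v)" .
  have "(\<Sum>v\<in>T. pmf \<mu> v) \<ge> pmf \<mu> s'" using finT s'V unfolding T_def by (intro member_le_sum) auto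
  moreover have "pmf \<mu> s' > 0" using s'V unfolding V_def by (simp add: pmf_positive)
  ultimately have "profit c \<mu> s < profit c \<mu> s'" using eq s'V by (smt (verit) mult_pos_pos)
  moreover have "profit c \<mu> s' \<le> profit c \<mu> s" using s unfolding opt_prices_def by auto
  ultimately show False by simp
qed


lemma key:
  assumes fin: "finite (set_pmf \<mu>)" and cv: "\<forall>v\<in>set_pmf \<mu>. c v \<le> v"
  shows "\<exists>\<nu> K. set_pmf \<nu> = opt_prices c \<mu> \<inter> set_pmf \<mu> \<and> K \<ge> 0 \<and>
           (\<forall>p\<in>opt_prices c \<mu>. profit c \<nu> p = K) \<and> (\<forall>q. profit c \<nu> q \<le> K)"
proof -
  define V where "V = set_pmf \<mu>"
  define S where "S = opt_prices c \<mu> \<inter> V"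
  obtain s0 where s0: "s0 \<in> V" "s0 \<in> opt_prices c \<mu>" using opt_nonempty[OF fin cv] V_def by auto
  have finV: "finite V" using fin V_def by simp
  have finS: "finite S" "S \<noteq> {}" using finV s0 by (auto simp: S_def)
  have MS: "Max S \<in> S" using finS by (rule Max_in)
  have MSV: "Max S \<le> Max V" using MS finV unfolding S_def by simp
  have c1: "\<forall>w\<in>S. w < Max S \<longrightarrow> c w < w"
  proof (intro ballI impI)
    fix w assume "w \<in> S" "w < Max S"
    then show "c w < w" using opt_c_less[OF fin cv, of w] MSV unfolding S_def V_def by simp
  qed
  have c2: "c (Max S) \<le> Max S" using MS cv unfolding S_def V_def by auto
  obtain \<nu> K where \<nu>: "set_pmf \<nu> = S" "K \<ge> 0" "\<forall>w\<in>S. profit c \<nu> w = K"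
    using ICD_exists[OF finS c1 c2] by blast
  have fin\<nu>: "finite (set_pmf \<nu>)" using \<nu>(1) finS by simp
  have le: "\<forall>q. profit c \<nu> q \<le> K" using ICD_max[OF fin\<nu>, of c K] \<nu> by auto
  have eqK: "profit c \<nu> p = K" if p: "p \<in> opt_prices c \<mu>" for p
  proof (cases "p \<in> V")
    case True then show ?thesis using \<nu> p S_def by auto
  next
    case False
    show ?thesis
    proof (cases "\<forall>v\<in>V. v < p")
      case True
      define m where "m = Max V"
      have mV: "m \<in> V" using fin set_pmf_not_empty unfolding V_def m_def by (metis Max_in)
      have pm0: "profit c \<mu> p = 0" using profit_above True unfolding V_def by auto
      have "profit c \<mu> m \<le> 0" using p pm0 unfolding opt_prices_def by auto
      moreover have "profit c \<mu> m = (m - c m) * pmf \<mu> m" using profit_top[OF fin] m_def V_def by auto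
      moreover have "pmf \<mu> m > 0" using mV V_def by (simp add: pmf_positive)
      moreover have "m - c m \<ge> 0" using cv mV V_def by auto
      ultimately have cm: "m - c m = 0"
        by (metis antisym mult_pos_pos not_less order_le_less)
      have pmz: "profit c \<mu> m = 0" using \<open>profit c \<mu> m = (m - c m) * pmf \<mu> m\<close> cm by simp
      have "m \<in> opt_prices c \<mu>" using p pm0 pmz unfolding opt_prices_def by auto
      hence mS: "m \<in> S" using mV S_def by auto
      have "Max S = m"
      proof (rule antisym)
        show "Max S \<le> m" using MSV m_def by simp
        show "m \<le> Max S" using mS finS by simp
      qed
      hence "K = (m - c m) * pmf \<nu> m" using profit_top[OF fin\<nu>, of m c] \<nu> mS by simp
      hence "K = 0" using cm by simp
      moreover have "profit c \<nu> p = 0" using profit_above True \<nu>(1) unfolding S_def by auto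
      ultimately show ?thesis by simp
    next
      case False
      then obtain v where "v \<in> set_pmf \<mu>" "p \<le> v" by (auto simp: not_less V_def)
      from profit_next[OF fin this, of c] obtain w where
        w: "w\<in>set_pmf \<mu>" "p \<le> w" "profit c \<mu> p = profit c \<mu> w - (w - p) * (\<Sum>x\<in>{x\<in>set_pmf \<mu>. x \<ge> w}. pmf \<mu> x)"
        "(\<Sum>x\<in>{x\<in>set_pmf \<mu>. x \<ge> w}. pmf \<mu> x) > 0" by blast
      have "w \<noteq> p" using w(1) \<open>p \<notin> V\<close> V_def by auto
      hence "w - p > 0" using w(2) by simp
      hence "profit c \<mu> p < profit c \<mu> w" using w(3,4) by (smt (verit) mult_pos_pos)
      moreover have "profit c \<mu> w \<le> profit c \<mu> p" using p unfolding opt_prices_def by auto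
      ultimately show ?thesis by simp
    qed
  qed
  show ?thesis using \<nu> le eqK unfolding S_def V_def by blast
qed


lemma main:
  fixes c :: "real \<Rightarrow> real"
  shows "finite (set_pmf \<mu>) \<Longrightarrow> \<forall>v\<in>set_pmf \<mu>. c v \<le> v \<Longrightarrow>
         \<exists>(J::nat) (\<nu>::nat \<Rightarrow> real pmf) (q::nat \<Rightarrow> real).
           (\<forall>j\<in>{1..J}. set_pmf (\<nu> j) \<subseteq> set_pmf \<mu> \<and> ICD c (\<nu> j)) \<and>
           (\<forall>j\<in>{1..J}. q j \<ge> 0) \<and> (\<Sum>j=1..J. q j) = 1 \<and>
           (\<forall>v. pmf \<mu> v = (\<Sum>j=1..J. q j * pmf (\<nu> j) v)) \<and>
           (\<forall>j\<in>{1..J}. opt_prices c \<mu> \<subseteq> opt_prices c (\<nu> j))"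
proof (induction "card (set_pmf \<mu>) + card (set_pmf \<mu> - opt_prices c \<mu>)" arbitrary: \<mu> rule: less_induct)
  case (less \<mu>)
  define V where "V = set_pmf \<mu>"
  define Op where "Op = opt_prices c \<mu>"
  define S where "S = Op \<inter> V"
  have finV: "finite V" using less.prems V_def by simp
  have cv: "\<forall>v\<in>V. c v \<le> v" using less.prems V_def by simp
  obtain \<nu> K where \<nu>: "set_pmf \<nu> = S" "K \<ge> 0" "\<forall>p\<in>Op. profit c \<nu> p = K" "\<forall>q. profit c \<nu> q \<le> K"
    using key[OF less.prems] unfolding S_def Op_def V_def by blast
  obtain s0 where s0: "s0 \<in> V" "s0 \<in> Op" using opt_nonempty[OF less.prems] V_def Op_def by auto
  define P where "P = profit c \<mu> s0"
  have PO: "\<forall>p\<in>Op. profit c \<mu> p = P"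
  proof
    fix p assume "p \<in> Op"
    then show "profit c \<mu> p = P" using s0 unfolding P_def Op_def opt_prices_def by (auto intro: antisym)
  qed
  have Pge: "\<forall>x. profit c \<mu> x \<le> P" using s0 unfolding P_def Op_def opt_prices_def by auto
  have qlt: "profit c \<mu> q < P" if "q \<notin> Op" for q
  proof -
    have "\<not> (\<forall>x. profit c \<mu> x \<le> profit c \<mu> q)" using that unfolding Op_def opt_prices_def by simp
    then obtain q' where "profit c \<mu> q < profit c \<mu> q'" by (auto simp: not_le)
    then show ?thesis using Pge by (meson less_le_trans)
  qed
  have SV: "S \<subseteq> V" "S \<noteq> {}" "finite S" using s0 finV unfolding S_def by auto
  have ICD\<nu>: "ICD c \<nu>" unfolding ICD_def using \<nu> S_def by auto
  have opt\<nu>: "Op \<subseteq> opt_prices c \<nu>" using \<nu>(3,4) unfolding opt_prices_def by auto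
  define Q where "Q = {q\<in>V - Op. profit c \<nu> q < K}"
  define r1 where "r1 v = pmf \<mu> v / pmf \<nu> v" for v
  define r2 where "r2 q = (P - profit c \<mu> q) / (K - profit c \<nu> q)" for q
  define t where "t = Min (r1 ` S \<union> r2 ` Q)"
  have finQ: "finite Q" using finV unfolding Q_def by simp
  have tin: "t \<in> r1 ` S \<union> r2 ` Q" unfolding t_def using finQ SV by (intro Min_in) auto
  have t1: "t \<le> r1 v" if "v \<in> S" for v unfolding t_def using finQ SV that by (intro Min_le) auto
  have t2: "t \<le> r2 q" if "q \<in> Q" for q unfolding t_def using finQ SV that by (intro Min_le) auto
  have pos\<mu>: "pmf \<mu> v > 0" if "v \<in> V" for v using that V_def by (simp add: pmf_positive)
  have pos\<nu>: "pmf \<nu> v > 0" if "v \<in> S" for v using that \<nu>(1) by (simp add: pmf_positive)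
  have tpos: "t > 0"
  proof -
    from tin show ?thesis
    proof
      assume "t \<in> r1 ` S"
      then obtain v where "v \<in> S" "t = r1 v" by auto
      then show ?thesis using pos\<mu> pos\<nu> SV unfolding r1_def by auto
    next
      assume "t \<in> r2 ` Q"
      then obtain q where "q \<in> Q" "t = r2 q" by auto
      then show ?thesis using qlt unfolding r2_def Q_def by auto
    qed
  qed
  have tle: "t * pmf \<nu> v \<le> pmf \<mu> v" for v
  proof (cases "v \<in> S")
    case True
    then show ?thesis using t1[OF True] pos\<nu>[OF True] unfolding r1_def by (simp add: pos_le_divide_eq)
  next
    case False
    then have "pmf \<nu> v = 0" using \<nu>(1) by (metis set_pmf_iff)
    then show ?thesis by simp
  qed
  have sub\<nu>: "set_pmf \<nu> \<subseteq> V" using \<nu>(1) SV by simp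
  have sum\<mu>: "(\<Sum>v\<in>V. pmf \<mu> v) = 1" using finV V_def by (intro sum_pmf_eq_1) auto
  have sum\<nu>: "(\<Sum>v\<in>V. pmf \<nu> v) = 1" using finV sub\<nu> by (intro sum_pmf_eq_1) auto
  have zero\<mu>: "pmf \<mu> v = 0" if "v \<notin> V" for v using that V_def by (metis set_pmf_iff)
  have zero\<nu>: "pmf \<nu> v = 0" if "v \<notin> V" for v using that sub\<nu> by (metis set_pmf_iff subsetD)
  show ?case
  proof (cases "t \<ge> 1")
    case True
    have le1: "pmf \<nu> v \<le> pmf \<mu> v" for v
    proof -
      have "pmf \<nu> v \<le> t * pmf \<nu> v" using True by (simp add: mult_le_cancel_right1)
      then show ?thesis using tle[of v] by simp
    qed
    have "(\<Sum>v\<in>V. pmf \<mu> v - pmf \<nu> v) = 0" using sum\<mu> sum\<nu> by (simp add: sum_subtractf)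
    then have "\<forall>v\<in>V. pmf \<mu> v - pmf \<nu> v = 0"
      using finV le1 by (subst sum_nonneg_eq_0_iff[symmetric]) auto
    then have eq: "\<mu> = \<nu>" using zero\<mu> zero\<nu> by (intro pmf_eqI) (metis eq_iff_diff_eq_0)
    show ?thesis
    proof (intro exI[of _ "1::nat"] exI[of _ "\<lambda>_. \<nu>"] exI[of _ "\<lambda>_. 1::real"] conjI)
      show "\<forall>j\<in>{1..1::nat}. set_pmf \<nu> \<subseteq> set_pmf \<mu> \<and> ICD c \<nu>" using sub\<nu> ICD\<nu> V_def by auto
      show "\<forall>j\<in>{1..1::nat}. 0 \<le> (1::real)" by simp
      show "(\<Sum>j=1..1::nat. 1::real) = 1" by simp
      show "\<forall>v. pmf \<mu> v = (\<Sum>j=1..1::nat. 1 * pmf \<nu> v)" using eq by simp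
      show "\<forall>j\<in>{1..1::nat}. opt_prices c \<mu> \<subseteq> opt_prices c \<nu>" using opt\<nu> Op_def by simp
    qed
  next
    case False
    hence tl1: "t < 1" by simp
    define f where "f v = (pmf \<mu> v - t * pmf \<nu> v) / (1 - t)" for v
    have f0: "\<And>v. 0 \<le> f v" unfolding f_def using tle tl1 by simp
    have f1: "\<And>v. v \<notin> V \<Longrightarrow> f v = 0" unfolding f_def using zero\<mu> zero\<nu> by simp
    have "(\<Sum>v\<in>V. f v) = (\<Sum>v\<in>V. pmf \<mu> v - t * pmf \<nu> v) / (1 - t)"
      unfolding f_def by (simp add: sum_divide_distrib)
    also have "\<dots> = 1" using sum\<mu> sum\<nu> tl1 by (simp add: sum_subtractf sum_distrib_left[symmetric])
    finally have f2: "(\<Sum>v\<in>V. f v) = 1" .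
    define \<mu>' where "\<mu>' = embed_pmf f"
    have pmf\<mu>': "pmf \<mu>' = f" and set\<mu>': "set_pmf \<mu>' = {x. f x \<noteq> 0}"
      unfolding \<mu>'_def using embed_fin[OF finV f0 f1 f2] by auto
    have sub\<mu>': "set_pmf \<mu>' \<subseteq> V" using set\<mu>' f1 by auto
    have mix: "\<forall>v. pmf \<mu> v = t * pmf \<nu> v + (1 - t) * pmf \<mu>' v"
      unfolding pmf\<mu>' f_def using tl1 by simp
    have prof: "\<And>x. profit c \<mu> x = t * profit c \<nu> x + (1 - t) * profit c \<mu>' x"
      using profit_mix[OF finV _ sub\<nu> sub\<mu>' mix] V_def by simp
    have cv': "\<forall>v\<in>set_pmf \<mu>'. c v \<le> v" using cv sub\<mu>' by auto
    have finV': "finite (set_pmf \<mu>')" using finV sub\<mu>' finite_subset by blast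
    have key2: "(1 - t) * profit c \<mu>' x = profit c \<mu> x - t * profit c \<nu> x" for x
      using prof[of x] by simp
    have Os: "(1 - t) * profit c \<mu>' s = P - t * K" if "s \<in> Op" for s
      using key2[of s] PO \<nu>(3) that by simp
    have Oopt: "Op \<subseteq> opt_prices c \<mu>'"
    proof
      fix s assume s: "s \<in> Op"
      have "\<forall>q\<in>V. profit c \<mu>' q \<le> profit c \<mu>' s"
      proof
        fix q assume qV: "q \<in> V"
        have "profit c \<mu> q - t * profit c \<nu> q \<le> P - t * K"
        proof (cases "q \<in> Op")
          case True then show ?thesis using PO \<nu>(3) by simp
        next
          case False
          show ?thesis
          proof (cases "profit c \<nu> q < K")
            case True
            hence "q \<in> Q" using False qV Q_def by simp
            hence "t \<le> (P - profit c \<mu> q) / (K - profit c \<nu> q)" using t2 r2_def by simp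
            hence "t * (K - profit c \<nu> q) \<le> P - profit c \<mu> q" using True by (simp add: pos_le_divide_eq)
            then show ?thesis by (simp add: algebra_simps)
          next
            case False
            hence "profit c \<nu> q = K" using \<nu>(4) by (meson antisym not_less)
            then show ?thesis using Pge by simp
          qed
        qed
        hence "(1 - t) * profit c \<mu>' q \<le> (1 - t) * profit c \<mu>' s" using key2 Os[OF s] by simp
        then show "profit c \<mu>' q \<le> profit c \<mu>' s" using tl1 by simp
      qed
      then show "s \<in> opt_prices c \<mu>'" using opt_check[OF finV sub\<mu>' cv'] by blast
    qed
    have sub2: "set_pmf \<mu>' - opt_prices c \<mu>' \<subseteq> V - Op" using sub\<mu>' Oopt by auto
    have dec: "card (set_pmf \<mu>') + card (set_pmf \<mu>' - opt_prices c \<mu>') < card V + card (V - Op)"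
    proof -
      from tin show ?thesis
      proof
        assume "t \<in> r1 ` S"
        then obtain v where v: "v \<in> S" "t = r1 v" by auto
        have "pmf \<nu> v > 0" using v pos\<nu> by simp
        hence "f v = 0" using v unfolding f_def r1_def by simp
        hence "set_pmf \<mu>' \<subset> V" using sub\<mu>' set\<mu>' v SV by auto
        hence "card (set_pmf \<mu>') < card V" using finV by (rule psubset_card_mono[rotated])
        moreover have "card (set_pmf \<mu>' - opt_prices c \<mu>') \<le> card (V - Op)"
          using sub2 finV by (intro card_mono) auto
        ultimately show ?thesis by simp
      next
        assume "t \<in> r2 ` Q"
        then obtain q where q: "q \<in> Q" "t = r2 q" by auto
        have Kq: "K - profit c \<nu> q > 0" using q Q_def by simp
        have "t * (K - profit c \<nu> q) = P - profit c \<mu> q" using q Kq unfolding r2_def by simp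
        hence "(1 - t) * profit c \<mu>' q = (1 - t) * profit c \<mu>' s0"
          using key2[of q] Os[OF s0(2)] by (simp add: algebra_simps)
        hence "profit c \<mu>' q = profit c \<mu>' s0" using tl1 by simp
        moreover have "s0 \<in> opt_prices c \<mu>'" using Oopt s0 by auto
        ultimately have "q \<in> opt_prices c \<mu>'" unfolding opt_prices_def by simp
        hence "set_pmf \<mu>' - opt_prices c \<mu>' \<subset> V - Op" using sub2 q Q_def by auto
        hence "card (set_pmf \<mu>' - opt_prices c \<mu>') < card (V - Op)" using finV
          by (intro psubset_card_mono) auto
        moreover have "card (set_pmf \<mu>') \<le> card V" using sub\<mu>' finV by (intro card_mono)
        ultimately show ?thesis by simp
      qed
    qed
    have dec': "card (set_pmf \<mu>') + card (set_pmf \<mu>' - opt_prices c \<mu>') < card (set_pmf \<mu>) + card (set_pmf \<mu> - opt_prices c \<mu>)"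
      using dec unfolding V_def Op_def .
    note ih = less.hyps[OF dec' finV' cv']
    obtain J :: nat and \<nu>s :: "nat \<Rightarrow> real pmf" and qs :: "nat \<Rightarrow> real" where IH:
      "\<forall>j\<in>{1..J}. set_pmf (\<nu>s j) \<subseteq> set_pmf \<mu>' \<and> ICD c (\<nu>s j)"
      "\<forall>j\<in>{1..J}. qs j \<ge> 0" "(\<Sum>j=1..J. qs j) = 1"
      "\<forall>v. pmf \<mu>' v = (\<Sum>j=1..J. qs j * pmf (\<nu>s j) v)"
      "\<forall>j\<in>{1..J}. opt_prices c \<mu>' \<subseteq> opt_prices c (\<nu>s j)"
      using ih by blast
    define \<nu>2 where "\<nu>2 j = (if j = Suc J then \<nu> else \<nu>s j)" for j
    define q2 where "q2 j = (if j = Suc J then t else (1 - t) * qs j)" for j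
    have sumq: "(\<Sum>j=1..Suc J. g j) = (\<Sum>j=1..J. g j) + g (Suc J)" for g :: "nat \<Rightarrow> real"
      by (simp add: sum.cl_ivl_Suc)
    have cong: "(\<Sum>j=1..J. h (q2 j) (\<nu>2 j)) = (\<Sum>j=1..J. h ((1 - t) * qs j) (\<nu>s j))" for h
      unfolding q2_def \<nu>2_def by (intro sum.cong) auto
    have A1: "\<forall>j\<in>{1..Suc J}. set_pmf (\<nu>2 j) \<subseteq> set_pmf \<mu> \<and> ICD c (\<nu>2 j)"
    proof
      fix j assume j: "j \<in> {1..Suc J}"
      show "set_pmf (\<nu>2 j) \<subseteq> set_pmf \<mu> \<and> ICD c (\<nu>2 j)"
      proof (cases "j = Suc J")
        case True then show ?thesis using sub\<nu> ICD\<nu> V_def \<nu>2_def by simp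
      next
        case False then have "j \<in> {1..J}" using j by auto
        then have "set_pmf (\<nu>s j) \<subseteq> set_pmf \<mu>'" "ICD c (\<nu>s j)" using IH(1) by auto
        then show ?thesis using sub\<mu>' V_def \<nu>2_def False by auto
      qed
    qed
    have A2: "\<forall>j\<in>{1..Suc J}. 0 \<le> q2 j"
    proof
      fix j assume j: "j \<in> {1..Suc J}"
      show "0 \<le> q2 j"
      proof (cases "j = Suc J")
        case True then show ?thesis using tpos q2_def by simp
      next
        case False then have "j \<in> {1..J}" using j by auto
        then show ?thesis using IH(2) tl1 q2_def False by simp
      qed
    qed
    have A3: "(\<Sum>j=1..Suc J. q2 j) = 1"
      unfolding sumq using cong[of "\<lambda>a b. a"] IH(3)
      by (simp add: q2_def sum_distrib_left[symmetric])
    have A4: "\<forall>v. pmf \<mu> v = (\<Sum>j=1..Suc J. q2 j * pmf (\<nu>2 j) v)"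
    proof
      fix v
      have "(\<Sum>j=1..Suc J. q2 j * pmf (\<nu>2 j) v) = (1 - t) * (\<Sum>j=1..J. qs j * pmf (\<nu>s j) v) + t * pmf \<nu> v"
        unfolding sumq using cong[of "\<lambda>a b. a * pmf b v"]
        by (simp add: q2_def \<nu>2_def sum_distrib_left mult.assoc)
      also have "\<dots> = pmf \<mu> v" using IH(4) mix by simp
      finally show "pmf \<mu> v = (\<Sum>j=1..Suc J. q2 j * pmf (\<nu>2 j) v)" by simp
    qed
    have A5: "\<forall>j\<in>{1..Suc J}. opt_prices c \<mu> \<subseteq> opt_prices c (\<nu>2 j)"
    proof
      fix j assume j: "j \<in> {1..Suc J}"
      show "opt_prices c \<mu> \<subseteq> opt_prices c (\<nu>2 j)"
      proof (cases "j = Suc J")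
        case True then show ?thesis using opt\<nu> Op_def \<nu>2_def by simp
      next
        case False then have "j \<in> {1..J}" using j by auto
        then have "opt_prices c \<mu>' \<subseteq> opt_prices c (\<nu>s j)" using IH(5) by blast
        then show ?thesis using Oopt Op_def \<nu>2_def False by auto
      qed
    qed
    show ?thesis
      apply (rule exI[of _ "Suc J"], rule exI[of _ \<nu>2], rule exI[of _ q2])
      using A1 A2 A3 A4 A5 by blast
  qed
qed


theorem lemmaD1:
  fixes \<mu> :: "real pmf" and c :: "real \<Rightarrow> real"
  assumes "finite (set_pmf \<mu>)"
    and "\<And>v. v \<in> set_pmf \<mu> \<Longrightarrow> c v \<le> v"
  shows "\<exists>(J::nat) (\<nu>::nat \<Rightarrow> real pmf) (q::nat \<Rightarrow> real).
           (\<forall>j\<in>{1..J}. set_pmf (\<nu> j) \<subseteq> set_pmf \<mu> \<and> ICD c (\<nu> j)) \<and>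
           (\<forall>j\<in>{1..J}. q j \<ge> 0) \<and> (\<Sum>j=1..J. q j) = 1 \<and>
           (\<forall>v. pmf \<mu> v = (\<Sum>j=1..J. q j * pmf (\<nu> j) v)) \<and>
           (\<forall>j\<in>{1..J}. opt_prices c \<mu> \<subseteq> opt_prices c (\<nu> j))"
  using main[of \<mu> c] assms by blast

end
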